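(* There are only finitely many (up to isomorphism) finite simple graphs $G$ with chromatic number $\chi(G)=3$ whose adjacency matrix is non-singular and which satisfy $\mathcal{E}(G)<n-1+\bar d$, where $n$ is the order of $G$.
   Context: For a finite simple graph $G$ with $n$ vertices and $m$ edges, $A(G)$ is its adjacency matrix with eigenvalues $\lambda_1\ge\cdots\ge\lambda_n$, and the energy is $\mathcal{E}(G)=\sum_{i=1}^n|\lambda_i|$. $\bar d=2m/n$ is the average degree. *)

theory Defs
  imports Complex_Main "Jordan_Normal_Form.Char_Poly"
begin

text \<open>A finite simple graph with vertex set {0..<n}, given by an edge predicate E
  which is symmetric, irreflexive and only relates vertices below n.
  Every finite simple graph is isomorphic to such a graph.\<close>

definition simple_graph :: "nat \<Rightarrow> (nat \<Rightarrow> nat \<Rightarrow> bool) \<Rightarrow> bool" where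
  "simple_graph n E \<longleftrightarrow>
     (\<forall>i j. E i j \<longrightarrow> i < n \<and> j < n) \<and> (\<forall>i j. E i j \<longrightarrow> E j i) \<and> (\<forall>i. \<not> E i i)"

definition graph_iso :: "nat \<Rightarrow> (nat \<Rightarrow> nat \<Rightarrow> bool) \<Rightarrow> nat \<Rightarrow> (nat \<Rightarrow> nat \<Rightarrow> bool) \<Rightarrow> bool" where
  "graph_iso n E n' E' \<longleftrightarrow>
     (\<exists>f. bij_betw f {0..<n} {0..<n'} \<and> (\<forall>i<n. \<forall>j<n. E i j \<longleftrightarrow> E' (f i) (f j)))"

definition colorable :: "nat \<Rightarrow> (nat \<Rightarrow> nat \<Rightarrow> bool) \<Rightarrow> nat \<Rightarrow> bool" where
  "colorable n E k \<longleftrightarrow>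
     (\<exists>c. (\<forall>i<n. c i < k) \<and> (\<forall>i<n. \<forall>j<n. E i j \<longrightarrow> c i \<noteq> c j))"

definition chromatic_number :: "nat \<Rightarrow> (nat \<Rightarrow> nat \<Rightarrow> bool) \<Rightarrow> nat" where
  "chromatic_number n E = (LEAST k. colorable n E k)"

definition num_edges :: "nat \<Rightarrow> (nat \<Rightarrow> nat \<Rightarrow> bool) \<Rightarrow> nat" where
  "num_edges n E = card {(i, j). i < j \<and> j < n \<and> E i j}"

definition avg_degree :: "nat \<Rightarrow> (nat \<Rightarrow> nat \<Rightarrow> bool) \<Rightarrow> real" where
  "avg_degree n E = 2 * real (num_edges n E) / real n"

definition adj_matrix :: "nat \<Rightarrow> (nat \<Rightarrow> nat \<Rightarrow> bool) \<Rightarrow> real mat" where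
  "adj_matrix n E = mat n n (\<lambda>(i, j). if E i j then 1 else 0)"

text \<open>Energy: sum of absolute values of all eigenvalues counted with (algebraic)
  multiplicity, i.e. over the complex roots of the characteristic polynomial.\<close>

definition energy :: "nat \<Rightarrow> (nat \<Rightarrow> nat \<Rightarrow> bool) \<Rightarrow> real" where
  "energy n E =
     (let p = char_poly (map_mat complex_of_real (adj_matrix n E))
      in \<Sum>z\<in>{z. poly p z = 0}. real (order z p) * cmod z)"

end

theory Submission imports Defs "Jordan_Normal_Form.Schur_Decomposition" begin

definition trm :: "nat \<Rightarrow> 'a::comm_ring_1 mat \<Rightarrow> 'a" where
  "trm n M = (\<Sum>i<n. M $$ (i,i))"

lemma trm_comm:
  assumes X: "X \<in> carrier_mat n n" and Y: "Y \<in> carrier_mat n n"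
  shows "trm n (X * Y) = trm n (Y * X)"
proof -
  have "trm n (X * Y) = (\<Sum>i<n. \<Sum>k<n. X $$ (i,k) * Y $$ (k,i))"
    unfolding trm_def using X Y by (auto simp: scalar_prod_def intro!: sum.cong sum.reindex_bij_witness[of _ id id])
  also have "\<dots> = (\<Sum>k<n. \<Sum>i<n. Y $$ (k,i) * X $$ (i,k))"
    by (subst sum.swap) (simp add: mult.commute)
  also have "\<dots> = trm n (Y * X)"
    unfolding trm_def using X Y by (auto simp: scalar_prod_def intro!: sum.cong sum.reindex_bij_witness[of _ id id])
  finally show ?thesis .
qed

lemma spectral_facts:
  fixes A :: "complex mat"
  assumes A: "A \<in> carrier_mat n n"
  obtains es where "length es = n" "char_poly A = (\<Prod>e\<leftarrow>es. [:-e,1:])"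
    "sum_list es = trm n A" "sum_list (map (\<lambda>e. e^2) es) = trm n (A * A)"
    "prod_list es = det A"
proof -
  obtain es where c: "char_poly A = (\<Prod>e\<leftarrow>es. [:-e,1:])" and l: "length es = n"
    using char_poly_factorized[OF A] by blast
  obtain B P Q where s: "schur_decomposition A es = (B,P,Q)" by (cases "schur_decomposition A es") auto
  from schur_decomposition[OF A c s] have w: "similar_mat_wit A B P Q" and ut: "upper_triangular B"
    and d: "diag_mat B = es" by auto
  from w A have B: "B \<in> carrier_mat n n" and P: "P \<in> carrier_mat n n" and Q: "Q \<in> carrier_mat n n"
    and PQ: "P * Q = 1\<^sub>m n" and QP: "Q * P = 1\<^sub>m n" and Ae: "A = P * B * Q"
    unfolding similar_mat_wit_def Let_def by auto
  have diag: "es ! i = B $$ (i,i)" if "i < n" for i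
    using d B that unfolding diag_mat_def by auto
  have "sum_list es = (\<Sum>i<n. es ! i)" using l by (simp add: sum_list_sum_nth atLeast0LessThan)
  also have "\<dots> = trm n B" unfolding trm_def using diag by simp
  also have "trm n B = trm n A"
  proof -
    have "trm n A = trm n (Q * (P * B))" using Ae trm_comm[of "P * B" n Q] P B Q by simp
    also have "Q * (P * B) = (Q * P) * B" using P B Q by (simp add: assoc_mult_mat)
    finally show ?thesis using QP B by simp
  qed
  finally have t1: "sum_list es = trm n A" .
  have AA: "A * A = P * (B * B) * Q"
  proof -
    have "A * A = P * (B * ((Q * P) * (B * Q)))" using Ae P B Q by (simp add: assoc_mult_mat[of _ n n _ n _ n])
    also have "\<dots> = P * (B * (B * Q))" using QP B Q by simp
    also have "\<dots> = P * (B * B) * Q" using P B Q by (simp add: assoc_mult_mat[of _ n n _ n _ n])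
    finally show ?thesis .
  qed
  have "trm n (A * A) = trm n (B * B)"
  proof -
    have "trm n (A * A) = trm n (Q * (P * (B * B)))" using AA trm_comm[of "P * (B*B)" n Q] P B Q by simp
    also have "Q * (P * (B * B)) = (Q * P) * (B * B)" using P B Q by (simp add: assoc_mult_mat[of _ n n _ n _ n])
    finally show ?thesis using QP B by simp
  qed
  also have "trm n (B * B) = (\<Sum>i<n. (B $$ (i,i))^2)"
  proof -
    have "trm n (B * B) = (\<Sum>i<n. \<Sum>k<n. B $$ (i,k) * B $$ (k,i))"
      unfolding trm_def using B by (auto simp: scalar_prod_def intro!: sum.cong sum.reindex_bij_witness[of _ id id])
    also have "\<dots> = (\<Sum>i<n. (B $$ (i,i))^2)"
    proof (rule sum.cong[OF refl])
      fix i assume i: "i \<in> {..<n}"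
      have "(\<Sum>k<n. B $$ (i,k) * B $$ (k,i)) = (\<Sum>k\<in>{i}. B $$ (i,k) * B $$ (k,i))"
      proof (rule sum.mono_neutral_right)
        show "\<forall>k\<in>{..<n} - {i}. B $$ (i, k) * B $$ (k, i) = 0"
        proof
          fix k assume k: "k \<in> {..<n} - {i}"
          show "B $$ (i, k) * B $$ (k, i) = 0"
          proof (cases "k < i")
            case True then show ?thesis using ut B i by auto
          next
            case False then have "i < k" using k by auto
            then have "B $$ (k, i) = 0" using ut B k by (intro upper_triangularD) auto
            then show ?thesis by simp
          qed
        qed
      qed (use i in auto)
      then show "(\<Sum>k<n. B $$ (i,k) * B $$ (k,i)) = (B $$ (i,i))^2" by (simp add: power2_eq_square)
    qed
    finally show ?thesis .
  qed
  also have "\<dots> = sum_list (map (\<lambda>e. e^2) es)"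
    using l diag by (simp add: sum_list_sum_nth atLeast0LessThan)
  finally have t2: "sum_list (map (\<lambda>e. e^2) es) = trm n (A * A)" by simp
  have "det A = det P * det B * det Q" using Ae P B Q by (simp add: det_mult)
  also have "det P * det Q = 1"
  proof -
    have "det P * det Q = det (P * Q)" using P Q by (simp add: det_mult)
    then show ?thesis using PQ by simp
  qed
  hence "det P * det B * det Q = det B" by (metis mult.commute mult.left_commute mult_1)
  also have "det B = prod_list (diag_mat B)" using det_upper_triangular[OF ut B] .
  finally have t3: "prod_list es = det A" using d by simp
  show ?thesis using that l c t1 t2 t3 by blast
qed

lemma order_prod_linear:
  "Polynomial.order z (\<Prod>e\<leftarrow>es. [:-e,1:]) = count_list es (z::complex)"
proof (induction es)
  case Nil then show ?case by (simp add: order_0I)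
next
  case (Cons e es)
  have nz1: "[:-e,1:] \<noteq> 0" by simp
  have nz2: "(\<Prod>e\<leftarrow>es. [:-e,1:]) \<noteq> 0" by (auto simp: prod_list_zero_iff)
  have nz: "[:-e,1:] * (\<Prod>e\<leftarrow>es. [:-e,1:]) \<noteq> 0"
    using nz1 nz2 by (metis mult_eq_0_iff)
  have "Polynomial.order z (\<Prod>e\<leftarrow>(e#es). [:-e,1:]) = Polynomial.order z [:-e,1:] + Polynomial.order z (\<Prod>e\<leftarrow>es. [:-e,1:])"
    using order_mult[OF nz] by simp
  then show ?case using Cons by (simp add: order_linear')
qed

lemma sum_list_count_real:
  "sum_list (map (f :: 'a \<Rightarrow> real) xs) = (\<Sum>x\<in>set xs. real (count_list xs x) * f x)"
proof (induction xs)
  case (Cons x xs)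
  have c: "real (count_list (x#xs) y) * f y = real (count_list xs y) * f y + (if y = x then f y else 0)" for y
    by (simp add: distrib_right)
  have "(\<Sum>y\<in>set (x#xs). real (count_list (x#xs) y) * f y)
      = (\<Sum>y\<in>insert x (set xs). real (count_list xs y) * f y) + (\<Sum>y\<in>insert x (set xs). (if y = x then f y else 0))"
    unfolding c by (simp only: list.set sum.distrib)
  also have "(\<Sum>y\<in>insert x (set xs). (if y = x then f y else 0)) = f x"
    by (simp add: sum.delta')
  also have "(\<Sum>y\<in>insert x (set xs). real (count_list xs y) * f y) = (\<Sum>y\<in>set xs. real (count_list xs y) * f y)"
  proof (cases "x \<in> set xs")
    case True then show ?thesis by (simp add: insert_absorb)
  next
    case False then show ?thesis by (simp add: count_list_0_iff)
  qed
  finally show ?case using Cons by simp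
qed simp

lemma energy_list:
  "(\<Sum>z\<in>{z. poly (\<Prod>e\<leftarrow>es. [:-e,1:]) z = 0}. real (Polynomial.order z (\<Prod>e\<leftarrow>es. [:-e,1:])) * cmod z)
    = sum_list (map cmod es)"
proof -
  have r: "{z. poly (\<Prod>e\<leftarrow>es. [:-e,1:]) z = 0} = set es"
    by (auto simp: poly_prod_list_zero_iff)
  show ?thesis unfolding r order_prod_linear by (simp add: sum_list_count_real)
qed

lemma key_ineq:
  fixes n a :: real
  assumes n: "n \<ge> 3000" and a: "0 < a" "a \<le> 17 * n / 18"
  shows "n - 1 + (n - 2) * ln a + a^2 \<le> n * a"
proof -
  define s where "s = sqrt a"
  have s0: "s > 0" using a s_def by simp
  have as: "a = s^2" using a s_def by simp
  have "ln a = 2 * ln s" using as s0 by (simp add: ln_realpow)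
  also have "\<dots> \<le> 2 * (s - 1)" using ln_le_minus_one[OF s0] by simp
  finally have l: "ln a \<le> 2 * (s - 1)" .
  have "(n - 2) * ln a \<le> (n - 2) * (2 * (s - 1))" using l n by (intro mult_left_mono) auto
  moreover have "s \<le> s^2/40 + 10" using zero_le_power2[of "s - 20"] by (simp add: power2_eq_square field_simps)
  hence q: "s^2 + 2*s + 3 - n \<le> 0" using a n as by simp
  have "(s - 1)^2 * (s^2 + 2*s + 3 - n) \<le> 0"
    using q by (simp add: mult_nonneg_nonpos)
  hence "n - 1 + (n - 2) * (2 * (s - 1)) + (s^2)^2 \<le> n * s^2"
    by (simp add: power2_eq_square algebra_simps)
  ultimately show ?thesis using as by simp
qed

lemma colorable_self: "simple_graph n E \<Longrightarrow> colorable n E n"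
  unfolding simple_graph_def colorable_def by (rule exI[of _ id]) auto

lemma chrom3: assumes "simple_graph n E" "chromatic_number n E = 3" shows "colorable n E 3"
  using LeastI_ex[of "colorable n E"] colorable_self[OF assms(1)] assms(2)
  unfolding chromatic_number_def by auto

lemma big_class:
  assumes "colorable n E 3"
  shows "\<exists>I \<subseteq> {..<n}. n \<le> 3 * card I \<and> (\<forall>i\<in>I. \<forall>j\<in>I. \<not> E i j)"
proof -
  obtain c :: "nat \<Rightarrow> nat" where c: "\<forall>i<n. c i < 3" "\<forall>i<n. \<forall>j<n. E i j \<longrightarrow> c i \<noteq> c j"
    using assms unfolding colorable_def by auto
  define C where "C k = {i. i < n \<and> c i = k}" for k
  have "{..<n} = C 0 \<union> C 1 \<union> C 2" using c(1) unfolding C_def by auto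
  hence "n \<le> card (C 0) + card (C 1) + card (C 2)"
    by (metis card_Un_le card_lessThan le_trans add_le_mono1)
  hence "n \<le> 3 * card (C 0) \<or> n \<le> 3 * card (C 1) \<or> n \<le> 3 * card (C 2)" by linarith
  then obtain k where k: "n \<le> 3 * card (C k)" by blast
  have "\<forall>i\<in>C k. \<forall>j\<in>C k. \<not> E i j"
  proof (intro ballI)
    fix i j assume "i \<in> C k" "j \<in> C k"
    then have "i < n" "j < n" "c i = c j" unfolding C_def by auto
    then show "\<not> E i j" using c(2) by blast
  qed
  moreover have "C k \<subseteq> {..<n}" unfolding C_def by auto
  ultimately show ?thesis using k by blast
qed

lemma edges_le:
  assumes "simple_graph n E"
  shows "2 * num_edges n E \<le> card {(i,j). i < n \<and> j < n \<and> E i j}"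
proof -
  define U where "U = {(i,j). i < j \<and> j < n \<and> E i j}"
  define P where "P = {(i,j). i < n \<and> j < n \<and> E i j}"
  have finP: "finite P"
    by (rule finite_subset[of _ "{..<n} \<times> {..<n}"]) (auto simp: P_def)
  have inj: "inj_on prod.swap U" by (auto simp: inj_on_def)
  have disj: "U \<inter> prod.swap ` U = {}" unfolding U_def by auto
  have sub: "U \<union> prod.swap ` U \<subseteq> P"
    using assms unfolding U_def P_def simple_graph_def by auto
  have finU: "finite U" using finite_subset[OF _ finP] sub by blast
  have "card (U \<union> prod.swap ` U) = card U + card (prod.swap ` U)"
    using disj finU by (intro card_Un_disjoint) auto
  also have "card (prod.swap ` U) = card U" using card_image[OF inj] .
  finally have "card (U \<union> prod.swap ` U) = 2 * card U" by simp
  moreover have "card (U \<union> prod.swap ` U) \<le> card P" using card_mono[OF finP sub] .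
  ultimately show ?thesis unfolding num_edges_def U_def P_def by simp
qed

lemma pairs_le:
  assumes I: "I \<subseteq> {..<n}" "n \<le> 3 * card I" "\<forall>i\<in>I. \<forall>j\<in>I. \<not> E i j"
  shows "9 * card {(i,j). i < n \<and> j < n \<and> E i j} \<le> 8 * n^2"
proof -
  define P where "P = {(i,j). i < n \<and> j < n \<and> E i j}"
  have sub: "P \<subseteq> ({..<n} \<times> {..<n}) - I \<times> I" using I unfolding P_def by auto
  have II: "I \<times> I \<subseteq> {..<n} \<times> {..<n}" using I by auto
  have "card P \<le> card (({..<n} \<times> {..<n}) - I \<times> I)"
    by (rule card_mono[OF _ sub]) auto
  also have "\<dots> = n * n - card I * card I"
    using II by (subst card_Diff_subset) (auto simp: card_cartesian_product intro: finite_subset[of I "{..<n}"])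
  finally have c: "card P \<le> n * n - card I * card I" .
  have "n * n \<le> (3 * card I) * (3 * card I)" using I(2) by (intro mult_le_mono) auto
  hence "n * n \<le> 9 * (card I * card I)" by simp
  with c have "9 * card P \<le> 9 * (n * n) - n * n" by linarith
  thus ?thesis unfolding P_def by (simp add: power2_eq_square)
qed

lemma main_bound:
  assumes G: "simple_graph n E" and chi: "chromatic_number n E = 3"
    and dt: "det (adj_matrix n E) \<noteq> 0" and nbig: "n \<ge> 3000"
  shows "real n - 1 + avg_degree n E \<le> energy n E"
proof -
  define A where "A = adj_matrix n E"
  define Ac where "Ac = map_mat complex_of_real A"
  define P where "P = {(i,j). i < n \<and> j < n \<and> E i j}"
  define M where "M = card P"
  have A: "A \<in> carrier_mat n n" unfolding A_def adj_matrix_def by simp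
  have Ac: "Ac \<in> carrier_mat n n" unfolding Ac_def using A by simp
  have Aent: "A $$ (i,j) = (if E i j then 1 else 0)" if "i < n" "j < n" for i j
    using that unfolding A_def adj_matrix_def by simp
  have Acent: "Ac $$ (i,j) = (if E i j then 1 else 0)" if "i < n" "j < n" for i j
    using that A Aent unfolding Ac_def by simp
  obtain es where l: "length es = n" and c: "char_poly Ac = (\<Prod>e\<leftarrow>es. [:-e,1:])"
    and t1: "sum_list es = trm n Ac" and t2: "sum_list (map (\<lambda>e. e^2) es) = trm n (Ac * Ac)"
    and t3: "prod_list es = det Ac"
    using spectral_facts[OF Ac] by blast
  have en: "energy n E = sum_list (map cmod es)"
    unfolding energy_def Let_def Ac_def[symmetric] A_def[symmetric] c energy_list ..
  have tr1: "trm n Ac = 0" unfolding trm_def using Acent G by (simp add: simple_graph_def)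
  have tr2: "trm n (Ac * Ac) = of_nat M"
  proof -
    have "trm n (Ac * Ac) = (\<Sum>i<n. \<Sum>k<n. Ac $$ (i,k) * Ac $$ (k,i))"
      unfolding trm_def using Ac by (auto simp: scalar_prod_def intro!: sum.cong sum.reindex_bij_witness[of _ id id])
    also have "\<dots> = (\<Sum>i<n. \<Sum>k<n. (if E i k then 1 else 0))"
      using Acent G by (auto simp: simple_graph_def intro!: sum.cong)
    also have "\<dots> = (\<Sum>p\<in>{..<n} \<times> {..<n}. (if E (fst p) (snd p) then 1 else 0))"
      by (simp add: sum.cartesian_product case_prod_beta)
    also have "\<dots> = of_nat (card (({..<n} \<times> {..<n}) \<inter> {p. E (fst p) (snd p)}))"
      by (simp add: sum.If_cases)
    also have "({..<n} \<times> {..<n}) \<inter> {p. E (fst p) (snd p)} = P" unfolding P_def by auto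
    finally show ?thesis unfolding M_def .
  qed
  define Ai :: "int mat" where "Ai = mat n n (\<lambda>(i,j). if E i j then 1 else 0)"
  have "A = map_mat of_int Ai" unfolding A_def adj_matrix_def Ai_def by (rule eq_matI) auto
  hence dA: "det A = of_int (det Ai)" by (simp add: of_int_hom.hom_det)
  have detA1: "\<bar>det A\<bar> \<ge> 1" using dt dA unfolding A_def by auto
  have dAc: "det Ac = complex_of_real (det A)" unfolding Ac_def by (simp add: of_real_hom.hom_det)
  define x where "x i = es ! i" for i
  define a where "a i = cmod (x i)" for i
  have sx: "(\<Sum>i<n. x i) = 0" using t1 tr1 l unfolding x_def by (simp add: sum_list_sum_nth atLeast0LessThan)
  have sx2: "(\<Sum>i<n. (x i)^2) = of_nat M" using t2 tr2 l unfolding x_def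
    by (simp add: sum_list_sum_nth atLeast0LessThan)
  have px: "(\<Prod>i<n. x i) = complex_of_real (det A)" using t3 dAc l unfolding x_def
    by (simp add: prod.list_conv_set_nth atLeast0LessThan)
  have En: "energy n E = (\<Sum>i<n. a i)" using en l unfolding a_def x_def
    by (simp add: sum_list_sum_nth atLeast0LessThan)
  have pa: "(\<Prod>i<n. a i) = \<bar>det A\<bar>" unfolding a_def prod_norm px by simp
  have apos: "a i > 0" if "i < n" for i
  proof -
    have "a i \<ge> 0" unfolding a_def by simp
    moreover have "a i \<noteq> 0"
    proof
      assume "a i = 0"
      hence "(\<Prod>i<n. a i) = 0" using that by (intro prod_zero) auto
      thus False using pa detA1 by simp
    qed
    ultimately show ?thesis by simp
  qed
  have sln: "(\<Sum>i<n. ln (a i)) \<ge> 0"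
  proof -
    have nz: "\<And>i. i \<in> {..<n} \<Longrightarrow> a i \<noteq> 0" using apos by force
    have "(\<Sum>i<n. ln (a i)) = ln (\<Prod>i<n. a i)" using ln_prod[of "{..<n}" a, OF _ nz] by simp
    also have "\<dots> \<ge> 0" using pa detA1 by simp
    finally show ?thesis .
  qed
  have sa2: "real M \<le> (\<Sum>i<n. (a i)^2)"
  proof -
    have "real M = Re (\<Sum>i<n. (x i)^2)" using sx2 by simp
    also have "\<dots> = (\<Sum>i<n. Re ((x i)^2))" by simp
    also have "\<dots> \<le> (\<Sum>i<n. (a i)^2)"
    proof (intro sum_mono)
      fix i assume "i \<in> {..<n}"
      show "Re ((x i)^2) \<le> (a i)^2" unfolding a_def
        using complex_Re_le_cmod[of "(x i)^2"] by (simp add: norm_power)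
    qed
    finally show ?thesis .
  qed
  have ahalf: "2 * a i \<le> energy n E" if i: "i < n" for i
  proof -
    have "x i + (\<Sum>j\<in>{..<n} - {i}. x j) = 0" using sx i by (simp add: sum.remove)
    hence "x i = - (\<Sum>j\<in>{..<n} - {i}. x j)" by (simp add: eq_neg_iff_add_eq_0)
    hence "a i = norm (\<Sum>j\<in>{..<n} - {i}. x j)" unfolding a_def by simp
    also have "\<dots> \<le> (\<Sum>j\<in>{..<n} - {i}. norm (x j))" by (rule norm_sum)
    finally have "a i \<le> (\<Sum>j\<in>{..<n} - {i}. a j)" unfolding a_def .
    moreover have "energy n E = a i + (\<Sum>j\<in>{..<n} - {i}. a j)" using En i by (simp add: sum.remove)
    ultimately show ?thesis by simp
  qed
  have e2: "2 * num_edges n E \<le> M" using edges_le[OF G] unfolding M_def P_def .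
  obtain I where I: "I \<subseteq> {..<n}" "n \<le> 3 * card I" "\<forall>i\<in>I. \<forall>j\<in>I. \<not> E i j"
    using big_class[OF chrom3[OF G chi]] by blast
  have M8: "9 * M \<le> 8 * n^2" using pairs_le[OF I] unfolding M_def P_def .
  have npos: "real n > 0" using nbig by simp
  have avg: "avg_degree n E \<le> real M / real n"
    unfolding avg_degree_def using e2 npos by (intro divide_right_mono) auto
  have Mn: "real M / real n \<le> 8 * real n / 9"
  proof -
    have "real (9 * M) \<le> real (8 * n^2)" using M8 by (simp only: of_nat_le_iff)
    hence "9 * real M \<le> 8 * real n ^ 2" by simp
    thus ?thesis using npos by (simp add: field_simps power2_eq_square)
  qed
  show ?thesis
  proof (rule ccontr)
    assume "\<not> ?thesis"
    hence lt: "energy n E < real n - 1 + real M / real n" using avg by linarith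
    have abound: "a i \<le> 17 * real n / 18" if "i < n" for i
      using ahalf[OF that] lt Mn by linarith
    have ki: "real n - 1 + (real n - 2) * ln (a i) + (a i)^2 \<le> real n * a i" if "i < n" for i
      using key_ineq[of "real n" "a i"] nbig apos[OF that] abound[OF that] by simp
    have "(\<Sum>i<n. real n - 1 + (real n - 2) * ln (a i) + (a i)^2) \<le> (\<Sum>i<n. real n * a i)"
      using ki by (intro sum_mono) auto
    hence "real n * (real n - 1) + (real n - 2) * (\<Sum>i<n. ln (a i)) + (\<Sum>i<n. (a i)^2) \<le> real n * energy n E"
      by (simp add: sum.distrib sum_distrib_left En)
    moreover have "(real n - 2) * (\<Sum>i<n. ln (a i)) \<ge> 0" using sln nbig by simp
    ultimately have "real n * (real n - 1) + real M \<le> real n * energy n E" using sa2 by linarith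
    hence "real n - 1 + real M / real n \<le> energy n E" using npos by (simp add: field_simps)
    with lt show False by simp
  qed
qed

theorem theorem3p4:
  shows "\<exists>S :: (nat \<times> (nat \<Rightarrow> nat \<Rightarrow> bool)) set. finite S \<and>
    (\<forall>n E. simple_graph n E \<and> chromatic_number n E = 3 \<and> det (adj_matrix n E) \<noteq> 0
       \<and> energy n E < real n - 1 + avg_degree n E
       \<longrightarrow> (\<exists>(n', E') \<in> S. graph_iso n E n' E'))"
proof -
  define S where "S = {(n', E'). n' < (3000::nat) \<and> simple_graph n' E'}"
  have fin: "finite S"
  proof -
    have "S \<subseteq> (\<lambda>(n', R). (n', \<lambda>i j. (i,j) \<in> R)) ` ({..<3000::nat} \<times> Pow ({..<3000::nat} \<times> {..<3000::nat}))"
    proof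
      fix y assume "y \<in> S"
      then obtain n' E' where y: "y = (n',E')" "n' < 3000" "simple_graph n' E'" by (auto simp: S_def)
      define R where "R = {(i,j). i < (3000::nat) \<and> j < (3000::nat) \<and> E' i j}"
      have "E' = (\<lambda>i j. (i,j) \<in> R)"
      proof (intro ext)
        fix i j
        have "E' i j \<longrightarrow> i < n' \<and> j < n'" using y(3) unfolding simple_graph_def by blast
        then show "E' i j = ((i,j) \<in> R)" using y(2) unfolding R_def by auto
      qed
      moreover have "R \<subseteq> {..<3000} \<times> {..<3000}" unfolding R_def by auto
      ultimately show "y \<in> (\<lambda>(n', R). (n', \<lambda>i j. (i,j) \<in> R)) ` ({..<3000::nat} \<times> Pow ({..<3000::nat} \<times> {..<3000::nat}))"
        using y by (intro image_eqI[of _ _ "(n', R)"]) auto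
    qed
    then show ?thesis by (rule finite_subset) auto
  qed
  show ?thesis
  proof (intro exI[of _ S] conjI fin allI impI)
    fix n E
    assume H: "simple_graph n E \<and> chromatic_number n E = 3 \<and> det (adj_matrix n E) \<noteq> 0
       \<and> energy n E < real n - 1 + avg_degree n E"
    show "\<exists>(n', E')\<in>S. graph_iso n E n' E'"
    proof (cases "n < 3000")
      case True
      have "graph_iso n E n E" unfolding graph_iso_def by (intro exI[of _ id]) auto
      moreover have "(n, E) \<in> S" using True H by (auto simp: S_def)
      ultimately show ?thesis by blast
    next
      case False
      then have "real n - 1 + avg_degree n E \<le> energy n E" using H main_bound[of n E] by auto
      then show ?thesis using H by linarith
    qed
  qed
qed
end
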